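(* Let $S$ be a semigroup and $p$ a congruence on $S$. If $\{S_k : k\in K\}$ is a family of congruence classes of $S$ modulo $p$ and $U=\bigcup_{k\in K}S_k$, then $\mathrm{Sep}\,U$ is either empty or a union of some congruence classes of $S$ modulo $p$.
   Context: For a semigroup $S$ and a subset $A\subseteq S$, the idealizer of $A$ is $\mathrm{Id}\,A=\{x\in S:\ xA\subseteq A,\ Ax\subseteq A\}$, and the separator of $A$ is $\mathrm{Sep}\,A=\mathrm{Id}\,A\cap \mathrm{Id}(S\setminus A)$, i.e. the set of all $x\in S$ with $xA\subseteq A$, $Ax\subseteq A$, $x(S\setminus A)\subseteq S\setminus A$ and $(S\setminus A)x\subseteq S\setminus A$. *)

theory Defs
  imports Main
begin

text \<open>The semigroup S is the carrier of a type of class semigroup_mult (S = UNIV).\<close>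

definition idealizer :: "'a::semigroup_mult set \<Rightarrow> 'a set" where
  "idealizer A = {x. (\<forall>a\<in>A. x * a \<in> A) \<and> (\<forall>a\<in>A. a * x \<in> A)}"

definition separator :: "'a::semigroup_mult set \<Rightarrow> 'a set" where
  "separator A = idealizer A \<inter> idealizer (- A)"

definition semigroup_congruence :: "('a::semigroup_mult \<times> 'a) set \<Rightarrow> bool" where
  "semigroup_congruence p \<longleftrightarrow> equiv UNIV p \<and>
     (\<forall>a b c. (a, b) \<in> p \<longrightarrow> (c * a, c * b) \<in> p \<and> (a * c, b * c) \<in> p)"

end

theory Submission
  imports Defs
begin

theorem theorem1:
  fixes p :: "('a::semigroup_mult \<times> 'a) set"
    and Sk :: "'k \<Rightarrow> 'a set" and K :: "'k set" and U :: "'a set"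
  assumes "semigroup_congruence p"
    and "\<forall>k\<in>K. Sk k \<in> UNIV // p"
    and "U = (\<Union>k\<in>K. Sk k)"
  shows "separator U = {} \<or> (\<exists>C. C \<subseteq> UNIV // p \<and> separator U = \<Union>C)"
proof -
  have eq: "equiv UNIV p" and cg: "\<And>a b c. (a, b) \<in> p \<Longrightarrow> (c * a, c * b) \<in> p \<and> (a * c, b * c) \<in> p"
    using assms(1) unfolding semigroup_congruence_def by auto
  have sym: "\<And>a b. (a,b) \<in> p \<Longrightarrow> (b,a) \<in> p" using eq unfolding equiv_def sym_def by blast
  have tr: "\<And>a b c. (a,b) \<in> p \<Longrightarrow> (b,c) \<in> p \<Longrightarrow> (a,c) \<in> p" using eq unfolding equiv_def trans_def by blast
  have refl: "\<And>a. (a,a) \<in> p" using eq unfolding equiv_def refl_on_def by blast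
  have satU: "b \<in> U" if ab: "(a,b) \<in> p" and aU: "a \<in> U" for a b
  proof -
    obtain k where k: "k \<in> K" "a \<in> Sk k" using aU assms(3) by blast
    then obtain z where z: "Sk k = p `` {z}" using assms(2) by (auto elim!: quotientE)
    then have "(z,a) \<in> p" using k by auto
    then have "(z,b) \<in> p" using tr ab by blast
    then show ?thesis using z k assms(3) by auto
  qed
  have satC: "b \<notin> U" if "(a,b) \<in> p" "a \<notin> U" for a b
    using satU[OF sym[OF that(1)]] that(2) by blast
  have clos: "y \<in> separator U" if "x \<in> separator U" "(x,y) \<in> p" for x y
  proof -
    have xs: "\<forall>a\<in>U. x*a \<in> U" "\<forall>a\<in>U. a*x \<in> U" "\<forall>a\<in>-U. x*a \<in> -U" "\<forall>a\<in>-U. a*x \<in> -U"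
      using that(1) unfolding separator_def idealizer_def by auto
    have "\<forall>a\<in>U. y*a \<in> U" using xs(1) satU cg[OF that(2)] by blast
    moreover have "\<forall>a\<in>U. a*y \<in> U" using xs(2) satU cg[OF that(2)] by blast
    moreover have "\<forall>a\<in>-U. y*a \<in> -U" using xs(3) satC cg[OF that(2)] by blast
    moreover have "\<forall>a\<in>-U. a*y \<in> -U" using xs(4) satC cg[OF that(2)] by blast
    ultimately show ?thesis unfolding separator_def idealizer_def by auto
  qed
  let ?C = "(\<lambda>x. p `` {x}) ` separator U"
  have "?C \<subseteq> UNIV // p" by (auto intro: quotientI)
  moreover have "separator U = \<Union>?C"
  proof
    show "separator U \<subseteq> \<Union>?C" using refl by blast
    show "\<Union>?C \<subseteq> separator U" using clos by blast
  qed
  ultimately show ?thesis by blast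
qed

end
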